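(* Fix $\mu,\nu$ with $\mu>-3$ and $|\nu|<\mu+3$, and fix $x>0$. Then the function $\delta\mapsto \tilde{t}_{\mu+\delta+1,\nu+\delta+1}(x)/\tilde{t}_{\mu+\delta,\nu+\delta}(x)$ is strictly decreasing on $(0,\infty)$.
   Context: For real $\mu,\nu$ the (normalized) modified Lommel function of the first kind is $$\tilde{t}_{\mu,\nu}(x)=\sum_{k=0}^\infty\frac{(\frac{1}{2}x)^{\mu+2k+1}}{\Gamma\big(k+\frac{\mu-\nu+3}{2}\big)\Gamma\big(k+\frac{\mu+\nu+3}{2}\big)},\quad x>0.$$ *)

theory Defs
  imports "HOL-Analysis.Analysis"
begin

definition lommel_t :: "real \<Rightarrow> real \<Rightarrow> real \<Rightarrow> real" where
  "lommel_t \<mu> \<nu> x =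
     (\<Sum>k. (x / 2) powr (\<mu> + 2 * real k + 1) /
           (Gamma (real k + (\<mu> - \<nu> + 3) / 2) * Gamma (real k + (\<mu> + \<nu> + 3) / 2)))"

end

theory Submission
  imports Defs
begin

lemma Gp1: "(z::real) > 0 \<Longrightarrow> Gamma (z + 1) = z * Gamma z"
  by (rule Gamma_plus1) (auto simp: nonpos_Ints_def)

definition g :: "real \<Rightarrow> real \<Rightarrow> real \<Rightarrow> nat \<Rightarrow> real" where
  "g a s y k = y ^ k / (Gamma (real k + a) * Gamma (real k + s))"

definition G :: "real \<Rightarrow> real \<Rightarrow> real \<Rightarrow> real" where
  "G a s y = (\<Sum>k. g a s y k)"

lemma g_Suc: "a > 0 \<Longrightarrow> s > 0 \<Longrightarrow> g a s y (Suc k) = g a s y k * (y / ((real k + a) * (real k + s)))"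
proof -
  assume a: "a > 0" and s: "s > 0"
  have "Gamma (real (Suc k) + a) = (real k + a) * Gamma (real k + a)"
    using Gp1[of "real k + a"] a by (simp add: add_ac)
  moreover have "Gamma (real (Suc k) + s) = (real k + s) * Gamma (real k + s)"
    using Gp1[of "real k + s"] s by (simp add: add_ac)
  moreover have "Gamma (real k + a) > 0" "Gamma (real k + s) > 0" using a s by auto
  ultimately show ?thesis unfolding g_def using a s by (simp add: field_simps)
qed

lemma g_nonneg: "a > 0 \<Longrightarrow> s > 0 \<Longrightarrow> y \<ge> 0 \<Longrightarrow> g a s y k \<ge> 0"
  unfolding g_def by simp

lemma g_pos: "a > 0 \<Longrightarrow> s > 0 \<Longrightarrow> y > 0 \<Longrightarrow> g a s y k > 0"
  unfolding g_def by simp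

lemma summable_g:
  assumes a: "a > 0" and s: "s > 0" and y: "y \<ge> 0"
  shows "summable (g a s y)"
proof (rule summable_ratio_test[where c = "1/2" and N = "nat (ceiling (2*y)) + 1"])
  fix n assume n: "n \<ge> nat (ceiling (2*y)) + 1"
  hence n1: "real n \<ge> 1" and n2: "real n \<ge> 2 * y" by linarith+
  have "real n * real n \<le> (real n + a) * (real n + s)"
    using a s by (intro mult_mono) auto
  moreover have "real n \<le> real n * real n" using n1 by (simp add: mult_le_cancel_left1)
  ultimately have P: "2 * y \<le> (real n + a) * (real n + s)" using n2 by linarith
  have pos: "(real n + a) * (real n + s) > 0" using a s by simp
  have "y / ((real n + a) * (real n + s)) \<le> 1/2"
    using P pos by (simp add: divide_le_eq)
  moreover have "y / ((real n + a) * (real n + s)) \<ge> 0" using pos y by simp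
  ultimately have q: "0 \<le> y / ((real n + a) * (real n + s))" "y / ((real n + a) * (real n + s)) \<le> 1/2" by auto
  have gn: "g a s y n \<ge> 0" using g_nonneg[OF a s y] .
  have "g a s y n * (y / ((real n + a) * (real n + s))) \<le> g a s y n * (1/2)"
    by (rule mult_left_mono[OF q(2) gn])
  moreover have "g a s y n * (y / ((real n + a) * (real n + s))) \<ge> 0" by (rule mult_nonneg_nonneg[OF gn q(1)])
  ultimately have le: "g a s y n * (y / ((real n + a) * (real n + s))) \<le> 1/2 * norm (g a s y n)"
    using gn by simp
  have "norm (g a s y (Suc n)) = g a s y n * (y / ((real n + a) * (real n + s)))"
    unfolding g_Suc[OF a s, of y n] real_norm_def by (rule abs_of_nonneg) fact
  with le show "norm (g a s y (Suc n)) \<le> 1/2 * norm (g a s y n)" by simp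
qed simp

lemma cheb:
  fixes w p r :: "nat \<Rightarrow> real"
  assumes w: "\<And>i. w i > 0" and sw: "summable w" and swr: "summable (\<lambda>i. w i * r i)"
   and swp: "summable (\<lambda>i. w i * p i)" and swpr: "summable (\<lambda>i. w i * p i * r i)"
   and rdec: "\<And>i. r (Suc i) < r i" and pmono: "\<And>i. p i \<le> p (Suc i)" and p01: "p 0 < p 1"
  shows "(\<Sum>i. w i * p i * r i) * (\<Sum>i. w i) < (\<Sum>i. w i * p i) * (\<Sum>i. w i * r i)"
proof -
  define B where "B = (\<Sum>i. w i)"
  define E where "E = (\<Sum>i. w i * r i)"
  define C where "C = (\<Sum>i. w i * p i)"
  define A where "A = (\<Sum>i. w i * p i * r i)"
  have Bpos: "B > 0" unfolding B_def by (rule suminf_pos[OF sw w])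
  define rb where "rb = E / B"
  have E_eq: "E = rb * B" using Bpos by (simp add: rb_def)
  have rle: "r j \<le> r i" if "i \<le> j" for i j
    using lift_Suc_antimono_le[of r, OF less_imp_le[OF rdec] that] .
  have ple: "p i \<le> p j" if "i \<le> j" for i j
    using lift_Suc_mono_le[of p, OF pmono that] .
  have "0 < (\<Sum>i. w i * r 0 - w i * r i)"
  proof (rule suminf_pos2[where i=1])
    show "summable (\<lambda>i. w i * r 0 - w i * r i)"
      by (intro summable_diff swr summable_mult2 sw)
    show "0 \<le> w i * r 0 - w i * r i" for i
      using rle[of 0 i] w[of i] by (simp add: algebra_simps mult_left_mono)
    show "0 < w 1 * r 0 - w 1 * r 1"
      using rdec[of 0] w[of 1] by (simp add: algebra_simps)
  qed
  also have "(\<Sum>i. w i * r 0 - w i * r i) = B * r 0 - E"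
    unfolding B_def E_def
    using suminf_diff[OF summable_mult2[OF sw, of "r 0"] swr] suminf_mult2[OF sw, of "r 0"] by simp
  finally have r0: "r 0 > rb" using Bpos E_eq by (simp add: mult.commute)
  have ex: "\<exists>k. r k < rb"
  proof (rule ccontr)
    assume "\<not> ?thesis"
    hence ge: "r k \<ge> rb" for k by (meson not_less)
    have "0 < (\<Sum>i. w i * r i - w i * rb)"
    proof (rule suminf_pos2[where i=0])
      show "summable (\<lambda>i. w i * r i - w i * rb)"
        by (intro summable_diff swr summable_mult2 sw)
      show "0 \<le> w i * r i - w i * rb" for i
        using ge[of i] w[of i] by (simp add: algebra_simps mult_left_mono)
      show "0 < w 0 * r 0 - w 0 * rb"
        using r0 w[of 0] by (simp add: algebra_simps)
    qed
    also have "(\<Sum>i. w i * r i - w i * rb) = E - B * rb"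
      unfolding B_def E_def
      using suminf_diff[OF swr summable_mult2[OF sw, of "rb"]] suminf_mult2[OF sw, of "rb"] by simp
    finally show False using E_eq by simp
  qed
  define m where "m = (LEAST k. r k < rb)"
  have rm: "r m < rb" unfolding m_def by (rule LeastI_ex[OF ex])
  have m0: "m \<noteq> 0" proof assume "m = 0" thus False using rm r0 by simp qed
  have before: "r i \<ge> rb" if "i < m" for i
    using not_less_Least[of i "\<lambda>k. r k < rb"] that unfolding m_def by simp
  have term_le: "w i * (p i - p m) * (r i - rb) \<le> 0" for i
  proof (cases "i < m")
    case True
    hence "p i - p m \<le> 0" "r i - rb \<ge> 0" using ple[of i m] before[of i] by auto
    thus ?thesis using w[of i] by (simp add: mult_nonneg_nonpos mult_nonpos_nonneg)
  next
    case False
    hence "p i - p m \<ge> 0" "r i - rb \<le> 0" using ple[of m i] rle[of m i] rm by auto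
    thus ?thesis using w[of i] by (simp add: mult_nonneg_nonpos)
  qed
  have term0: "w 0 * (p 0 - p m) * (r 0 - rb) < 0"
  proof -
    have "p 1 \<le> p m" using ple[of 1 m] m0 by simp
    hence "p 0 - p m < 0" using p01 by simp
    moreover have "r 0 - rb > 0" using r0 by simp
    ultimately show ?thesis using w[of 0] by (simp add: mult_pos_neg mult_neg_pos)
  qed
  have sT: "summable (\<lambda>i. w i * p i * r i - rb * (w i * p i) - p m * (w i * r i) + (p m * rb) * w i)"
    by (intro summable_add summable_diff summable_mult swpr swp swr sw)
  have "0 < (\<Sum>i. - (w i * p i * r i - rb * (w i * p i) - p m * (w i * r i) + (p m * rb) * w i))"
  proof (rule suminf_pos2[where i=0])
    show "summable (\<lambda>i. - (w i * p i * r i - rb * (w i * p i) - p m * (w i * r i) + (p m * rb) * w i))"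
      using summable_minus[OF sT] .
    show "0 \<le> - (w i * p i * r i - rb * (w i * p i) - p m * (w i * r i) + (p m * rb) * w i)" for i
      using term_le[of i] by (simp add: algebra_simps)
    show "0 < - (w 0 * p 0 * r 0 - rb * (w 0 * p 0) - p m * (w 0 * r 0) + (p m * rb) * w 0)"
      using term0 by (simp add: algebra_simps)
  qed
  also have "(\<Sum>i. - (w i * p i * r i - rb * (w i * p i) - p m * (w i * r i) + (p m * rb) * w i))
      = - (A - rb * C - p m * E + p m * rb * B)"
  proof (rule sums_unique[symmetric])
    show "(\<lambda>i. - (w i * p i * r i - rb * (w i * p i) - p m * (w i * r i) + (p m * rb) * w i)) sums
      (- (A - rb * C - p m * E + p m * rb * B))"
      unfolding A_def B_def C_def E_def
      by (intro sums_minus sums_add sums_diff sums_mult summable_sums swpr swp swr sw)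
  qed
  finally have "A - rb * C < 0" using E_eq by (simp add: algebra_simps)
  hence "A * B < rb * C * B" using Bpos by (simp add: algebra_simps)
  thus ?thesis unfolding A_def[symmetric] B_def[symmetric] C_def[symmetric] E_def[symmetric]
    using E_eq by (simp add: algebra_simps)
qed

lemma key:
  assumes a: "a > 0" and s1: "0 < s1" and s12: "s1 < s2" and y: "y > 0"
  shows "G a (s2 + 1) y * G a s1 y < G a (s1 + 1) y * G a s2 y"
proof -
  have s2: "s2 > 0" using s1 s12 by simp
  define w where "w = g a s1 y"
  define r where "r i = Gamma (real i + s1) / Gamma (real i + s2)" for i
  define p where "p i = (if i = 0 then 0 else real i - 1 + a)" for i
  have GA: "Gamma (real i + a) > 0" for i using a by simp
  have G1: "Gamma (real i + s1) > 0" for i using s1 by simp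
  have G2: "Gamma (real i + s2) > 0" for i using s2 by simp
  have Ga1: "Gamma (real (Suc i) + a) = (real i + a) * Gamma (real i + a)" for i
    using Gp1[of "real i + a"] a by (simp add: add_ac)
  have Gs1: "Gamma (real (Suc i) + s1) = (real i + s1) * Gamma (real i + s1)" for i
    using Gp1[of "real i + s1"] s1 by (simp add: add_ac)
  have Gs2: "Gamma (real (Suc i) + s2) = (real i + s2) * Gamma (real i + s2)" for i
    using Gp1[of "real i + s2"] s2 by (simp add: add_ac)
  have I1: "g a s2 y i = w i * r i" for i
    unfolding w_def r_def g_def using GA[of i] G1[of i] G2[of i] by (simp add: field_simps)
  have pS: "p (Suc i) = real i + a" for i unfolding p_def by simp
  have I2: "w (Suc i) * p (Suc i) = y * g a (s1 + 1) y i" for i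
  proof -
    have "Gamma (real i + (s1 + 1)) = Gamma (real (Suc i) + s1)" by (simp add: add_ac)
    moreover have "c > 0 \<Longrightarrow> y ^ Suc i / (c * X * Z) * c = y * y ^ i / (X * Z)" for c X Z :: real
      by (simp add: field_simps)
    ultimately show ?thesis unfolding w_def pS g_def Ga1[of i] using a
      by (simp del: of_nat_Suc)
  qed
  have I3: "w (Suc i) * p (Suc i) * r (Suc i) = y * g a (s2 + 1) y i" for i
  proof -
    have "Gamma (real i + (s2 + 1)) = Gamma (real (Suc i) + s2)" by (simp add: add_ac)
    moreover have "c > 0 \<Longrightarrow> Z > 0 \<Longrightarrow> y ^ Suc i / (c * X * Z) * c * (Z / W) = y * y ^ i / (X * W)" for c X Z W :: real
      by (simp add: field_simps)
    ultimately show ?thesis unfolding w_def pS g_def r_def Ga1[of i] using a G1[of "Suc i"]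
      by (simp del: of_nat_Suc)
  qed
  have wpos: "w i > 0" for i unfolding w_def by (rule g_pos[OF a s1 y])
  have sw: "summable w" unfolding w_def using summable_g[OF a s1] y by simp
  have I1': "g a s2 y = (\<lambda>i. w i * r i)" using I1 by auto
  have swr: "summable (\<lambda>i. w i * r i)" using summable_g[OF a s2, of y] y unfolding I1' by simp
  have sC: "(\<lambda>i. w i * p i) sums (y * G a (s1 + 1) y)"
  proof -
    have "(\<lambda>i. w (Suc i) * p (Suc i)) sums (y * G a (s1 + 1) y)"
      unfolding I2 G_def using summable_g[of a "s1 + 1" y] a s1 y
      by (intro sums_mult summable_sums) auto
    thus ?thesis by (subst (asm) sums_Suc_iff) (simp add: p_def)
  qed
  have sA: "(\<lambda>i. w i * p i * r i) sums (y * G a (s2 + 1) y)"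
  proof -
    have "(\<lambda>i. w (Suc i) * p (Suc i) * r (Suc i)) sums (y * G a (s2 + 1) y)"
      unfolding I3 G_def using summable_g[of a "s2 + 1" y] a s2 y
      by (intro sums_mult summable_sums) auto
    thus ?thesis by (subst (asm) sums_Suc_iff) (simp add: p_def)
  qed
  have rdec: "r (Suc i) < r i" for i
  proof -
    have rS: "r (Suc i) = r i * ((real i + s1) / (real i + s2))"
      unfolding r_def Gs1 Gs2 using G1[of i] G2[of i] s1 s2 by (simp add: field_simps)
    moreover have "(real i + s1) / (real i + s2) < 1" using s1 s12 by simp
    moreover have "r i > 0" unfolding r_def using G1[of i] G2[of i] by simp
    ultimately have "r i * ((real i + s1) / (real i + s2)) < r i * 1"
      by (intro mult_strict_left_mono) auto
    with rS show ?thesis by simp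
  qed
  have pmono: "p i \<le> p (Suc i)" for i unfolding p_def using a by auto
  have p01: "p 0 < p 1" unfolding p_def using a by simp
  have ch: "(\<Sum>i. w i * p i * r i) * (\<Sum>i. w i) < (\<Sum>i. w i * p i) * (\<Sum>i. w i * r i)"
    by (rule cheb[OF wpos sw swr sums_summable[OF sC] sums_summable[OF sA] rdec pmono p01])
  have "(\<Sum>i. w i) = G a s1 y" unfolding G_def w_def ..
  moreover have "(\<Sum>i. w i * r i) = G a s2 y" unfolding G_def I1' ..
  ultimately have "y * G a (s2 + 1) y * G a s1 y < y * G a (s1 + 1) y * G a s2 y"
    using ch sums_unique[OF sC] sums_unique[OF sA] by simp
  thus ?thesis using y by (simp add: mult.assoc)
qed

lemma lommel_eq:
  assumes x: "x > 0" and A: "(m - n + 3) / 2 > 0" and S: "(m + n + 3) / 2 > 0"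
  shows "lommel_t m n x = (x / 2) powr (m + 1) * G ((m - n + 3) / 2) ((m + n + 3) / 2) ((x / 2)^2)"
proof -
  have t: "(x / 2) powr (m + 2 * real k + 1) /
           (Gamma (real k + (m - n + 3) / 2) * Gamma (real k + (m + n + 3) / 2))
        = (x / 2) powr (m + 1) * g ((m - n + 3) / 2) ((m + n + 3) / 2) ((x / 2)^2) k" for k
  proof -
    have "(x / 2) powr (m + 2 * real k + 1) = (x / 2) powr (m + 1) * (x / 2) powr (real (2 * k))"
      by (simp add: powr_add[symmetric] algebra_simps)
    also have "(x / 2) powr (real (2 * k)) = ((x / 2)^2) ^ k"
      unfolding power_mult[symmetric] by (rule powr_realpow) (use x in simp)
    finally show ?thesis unfolding g_def by simp
  qed
  show ?thesis unfolding lommel_t_def t G_def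
    by (rule suminf_mult) (rule summable_g[OF A S], simp)
qed

theorem theorem3p2:
  fixes \<mu> \<nu> x :: real
  assumes "\<mu> > -3" and "\<bar>\<nu>\<bar> < \<mu> + 3" and "x > 0"
  shows "\<forall>d1 d2. 0 < d1 \<and> d1 < d2 \<longrightarrow>
           lommel_t (\<mu> + d2 + 1) (\<nu> + d2 + 1) x / lommel_t (\<mu> + d2) (\<nu> + d2) x
         < lommel_t (\<mu> + d1 + 1) (\<nu> + d1 + 1) x / lommel_t (\<mu> + d1) (\<nu> + d1) x"
proof (intro allI impI)
  fix d1 d2 :: real assume d: "0 < d1 \<and> d1 < d2"
  define a where "a = (\<mu> - \<nu> + 3) / 2"
  define b where "b = (\<mu> + \<nu> + 3) / 2"
  define z where "z = x / 2"
  define y where "y = z ^ 2"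
  have a: "a > 0" and b: "b > 0" using assms unfolding a_def b_def by (auto simp: abs_less_iff)
  have z: "z > 0" using assms unfolding z_def by simp
  have y: "y > 0" using z unfolding y_def by simp
  have ratio: "lommel_t (\<mu> + d + 1) (\<nu> + d + 1) x / lommel_t (\<mu> + d) (\<nu> + d) x
      = z * G a (b + d + 1) y / G a (b + d) y" if dpos: "d > 0" for d
  proof -
    have e1: "(\<mu> + d - (\<nu> + d) + 3) / 2 = a" "(\<mu> + d + (\<nu> + d) + 3) / 2 = b + d"
      unfolding a_def b_def by (simp_all add: field_simps)
    have e2: "(\<mu> + d + 1 - (\<nu> + d + 1) + 3) / 2 = a" "(\<mu> + d + 1 + (\<nu> + d + 1) + 3) / 2 = b + d + 1"
      unfolding a_def b_def by (simp_all add: field_simps)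
    have L0: "lommel_t (\<mu> + d) (\<nu> + d) x = z powr (\<mu> + d + 1) * G a (b + d) y"
      using lommel_eq[of x "\<mu> + d" "\<nu> + d"] assms(3) a b dpos
      unfolding e1 z_def[symmetric] y_def[symmetric] by simp
    have zp: "z powr (\<mu> + d + 1 + 1) = z powr (\<mu> + d + 1) * z"
      using powr_add[of z "\<mu> + d + 1" 1] z by simp
    have L1: "lommel_t (\<mu> + d + 1) (\<nu> + d + 1) x = z powr (\<mu> + d + 1) * z * G a (b + d + 1) y"
      using lommel_eq[of x "\<mu> + d + 1" "\<nu> + d + 1"] assms(3) a b dpos
      unfolding e2 z_def[symmetric] y_def[symmetric] zp by simp
    have "G a (b + d) y > 0" unfolding G_def
      using summable_g[OF a, of "b + d" y] g_pos[OF a _ y, of "b + d"] b dpos y by (intro suminf_pos) auto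
    moreover have "z powr (\<mu> + d + 1) > 0" using z by simp
    ultimately show ?thesis unfolding L0 L1 by (simp add: field_simps)
  qed
  have G1: "G a (b + d1) y > 0" unfolding G_def
    using summable_g[OF a, of "b + d1" y] g_pos[OF a _ y, of "b + d1"] b d y by (intro suminf_pos) auto
  have G2: "G a (b + d2) y > 0" unfolding G_def
    using summable_g[OF a, of "b + d2" y] g_pos[OF a _ y, of "b + d2"] b d y by (intro suminf_pos) auto
  have K: "G a (b + d2 + 1) y * G a (b + d1) y < G a (b + d1 + 1) y * G a (b + d2) y"
    using key[OF a _ _ y, of "b + d1" "b + d2"] b d by simp
  have "z * G a (b + d2 + 1) y / G a (b + d2) y < z * G a (b + d1 + 1) y / G a (b + d1) y"
    using K G1 G2 z by (simp add: divide_less_eq less_divide_eq field_simps)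
  thus "lommel_t (\<mu> + d2 + 1) (\<nu> + d2 + 1) x / lommel_t (\<mu> + d2) (\<nu> + d2) x
         < lommel_t (\<mu> + d1 + 1) (\<nu> + d1 + 1) x / lommel_t (\<mu> + d1) (\<nu> + d1) x"
    using ratio[of d1] ratio[of d2] d by simp
qed

end
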